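(* Let $k=6$, $p\in\mathbb{S}^n$ ($n\ge2$), $R\in(0,\pi/2)$, $B_R=\{q:\mathbf{d}_p(q)\le R\}$, $y\in\partial B_R$, and $\gamma:[R,\pi]\to\mathbb{S}^n$ the unit-speed minimizing geodesic from $y$ to $-p$ with $\mathbf{d}_p(\gamma(s))=s$. Let $h,f_1,f_2$ be smooth functions on $(R,\pi)$. Then the identity \[-15\sin R\,\langle\Psi_{\gamma(s)},\nabla\mathbf{d}_p\rangle\big|_x\,h(s)-3\cos R\,h(s)=\frac{d}{ds}\sum_{i=1}^2\frac{f_i(s)\sin^4s}{(1-\cos\mathbf{d}_x(\gamma(s)))^i}\] holding for all $x\in\partial B_R\setminus\{y\}$ and $s\in(R,\pi)$ is equivalent to the conditions that $h(s)=f_2(s)\sin^3s$ and $\boldsymbol f=(f_1,f_2)$ solves the system $\boldsymbol f'=A\boldsymbol f$, where \[A=\frac{1}{\sin s}\begin{pmatrix}-3\cos s&3\cos s\\ \cos R-\cos s&\cos s-\cos R\end{pmatrix}.\]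
   Context: $\mathbb{S}^n$ is the unit round sphere with Levi-Civita connection $\nabla$; $\mathbf{d}_q$ is geodesic distance from $q$. With $k=6$: $I_k(r)=\int_0^r\sin^{k-1}s\,ds$, $\varphi(t)=I_k(t)\sin^{1-k}t$ for $t\in(0,\pi)$, $\varphi(0)=0$, $\Phi_q=(\varphi\circ\mathbf{d}_q)\nabla\mathbf{d}_q$ on $\mathbb{S}^n\setminus\{-q\}$, and $\Psi_q:=\Phi_{-q}$ on $\mathbb{S}^n\setminus\{q\}$. *)

theory Defs
  imports "HOL-Analysis.Analysis"
begin

text \<open>The unit sphere S^n is modelled as sphere 0 1 in a Euclidean space 'a
  with DIM('a) = n+1.\<close>

definition sdist :: "'a::euclidean_space \<Rightarrow> 'a \<Rightarrow> real" where
  "sdist q x = arccos (q \<bullet> x)"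

text \<open>Riemannian gradient of d_q at x (for x different from q and -q): the
  tangential projection of the Euclidean gradient of arccos (q . x), i.e.
  -(q - (q . x) x) / sin (d_q x).\<close>
definition grad_d :: "'a::euclidean_space \<Rightarrow> 'a \<Rightarrow> 'a" where
  "grad_d q x = (- 1 / sin (sdist q x)) *\<^sub>R (q - (q \<bullet> x) *\<^sub>R x)"

definition I6 :: "real \<Rightarrow> real" where
  "I6 r = integral {0..r} (\<lambda>s. sin s ^ 5)"

definition phi6 :: "real \<Rightarrow> real" where
  "phi6 t = (if t = 0 then 0 else I6 t / sin t ^ 5)"

text \<open>Phi_q = (phi o d_q) grad d_q on S^n minus {-q}; at x = q it is 0 since phi 0 = 0.\<close>
definition Phi6 :: "'a::euclidean_space \<Rightarrow> 'a \<Rightarrow> 'a" where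
  "Phi6 q x = (if sdist q x = 0 then 0 else phi6 (sdist q x) *\<^sub>R grad_d q x)"

definition Psi6 :: "'a::euclidean_space \<Rightarrow> 'a \<Rightarrow> 'a" where
  "Psi6 q x = Phi6 (- q) x"

definition smooth_on :: "real set \<Rightarrow> (real \<Rightarrow> real) \<Rightarrow> bool" where
  "smooth_on S f \<longleftrightarrow>
     (\<forall>k. \<forall>x\<in>S. ((deriv ^^ k) f has_real_derivative (deriv ^^ Suc k) f x) (at x))"

end

theory Submission
  imports Defs
begin

lemma inner_bounds:
  fixes q x :: "'a::euclidean_space"
  assumes "norm q = 1" "norm x = 1"
  shows "-1 \<le> q \<bullet> x" "q \<bullet> x \<le> 1"
  using Cauchy_Schwarz_ineq2[of q x] assms by (auto simp: abs_le_iff)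

lemma cos_sdist:
  fixes q x :: "'a::euclidean_space"
  assumes "norm q = 1" "norm x = 1"
  shows "cos (sdist q x) = q \<bullet> x"
  using inner_bounds[OF assms] by (simp add: sdist_def cos_arccos)

lemma sdist_eq_iff:
  fixes q x :: "'a::euclidean_space"
  assumes "norm q = 1" "norm x = 1" "0 \<le> r" "r \<le> pi"
  shows "sdist q x = r \<longleftrightarrow> q \<bullet> x = cos r"
  using inner_bounds[OF assms(1,2)] assms(3,4)
  by (auto simp: sdist_def cos_arccos arccos_cos)

lemma I6_eq:
  assumes "0 \<le> u"
  shows "I6 u = 8/15 - cos u + 2/3 * cos u ^ 3 - 1/5 * cos u ^ 5"
proof -
  define F where "F = (\<lambda>t::real. - cos t + 2/3 * cos t ^ 3 - 1/5 * cos t ^ 5)"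
  have d: "(F has_real_derivative sin t ^ 5) (at t)" for t
  proof -
    have "(F has_real_derivative (sin t - 2 * cos t ^ 2 * sin t + cos t ^ 4 * sin t)) (at t)"
      unfolding F_def by (auto intro!: derivative_eq_intros simp: field_simps power2_eq_square power4_eq_xxxx)
    moreover have "sin t - 2 * cos t ^ 2 * sin t + cos t ^ 4 * sin t = sin t ^ 5"
    proof -
      have "sin t ^ 5 = sin t * (sin t ^ 2)^2" by algebra
      also have "\<dots> = sin t * (1 - cos t ^ 2)^2" by (simp add: sin_squared_eq)
      finally show ?thesis by algebra
    qed
    ultimately show ?thesis by simp
  qed
  have "((\<lambda>s. sin s ^ 5) has_integral (F u - F 0)) {0..u}"
    by (rule fundamental_theorem_of_calculus[OF assms])
      (auto intro!: has_field_derivative_at_within d simp: has_real_derivative_iff_has_vector_derivative[symmetric])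
  then show ?thesis unfolding I6_def by (simp add: integral_unique F_def)
qed

lemma quad_zero:
  fixes A0 A1 A2 c1 c2 c3 :: real
  assumes "A0 + A1*c1 + A2*c1^2 = 0" "A0 + A1*c2 + A2*c2^2 = 0" "A0 + A1*c3 + A2*c3^2 = 0"
    "c1 \<noteq> c2" "c1 \<noteq> c3" "c2 \<noteq> c3"
  shows "A0 = 0 \<and> A1 = 0 \<and> A2 = 0"
proof -
  have "(c1 - c2) * (A1 + A2*(c1+c2)) = 0" using assms(1,2) by (simp add: algebra_simps power2_eq_square)
  then have 1: "A1 + A2*(c1+c2) = 0" using assms(4) by simp
  have "(c1 - c3) * (A1 + A2*(c1+c3)) = 0" using assms(1,3) by (simp add: algebra_simps power2_eq_square)
  then have 2: "A1 + A2*(c1+c3) = 0" using assms(5) by simp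
  have "A2 * (c2 - c3) = (A1 + A2*(c1+c2)) - (A1 + A2*(c1+c3))" by (simp add: algebra_simps)
  then have "A2 * (c2 - c3) = 0" using 1 2 by simp
  then have "A2 = 0" using assms(6) by simp
  then show ?thesis using 1 assms(1) by simp
qed

definition RV :: "real \<Rightarrow> real \<Rightarrow> real \<Rightarrow> real \<Rightarrow> real \<Rightarrow> real \<Rightarrow> real \<Rightarrow> real \<Rightarrow> real" where
  "RV wn cs c c' D1 D2 F1 F2 = D1 * wn^4/(1-c) + F1 * (4 * wn^3 * cs)/(1-c) + F1 * wn^4 * c'/(1-c)^2
     + D2 * wn^4/(1-c)^2 + F2 * (4*wn^3*cs)/(1-c)^2 + 2 * F2 * wn^4 * c'/(1-c)^3"

definition LV :: "real \<Rightarrow> real \<Rightarrow> real \<Rightarrow> real \<Rightarrow> real" where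
  "LV cs C c H = (-(8-9*c+3*c^2)*(c*C - cs)/(1-c)^3) * H - 3*C*H"

definition cA2 where "cA2 wn cs C D1 D2 F1 F2 H = D1 * wn^4 + 3 * F1 * wn^3 * cs - 3 * cs * H"
definition cA1 where "cA1 wn cs C D1 D2 F1 F2 H = -2 * D1 * wn^4 - 7 * F1 * wn^3 * cs + F1 * wn^3 * C - D2 * wn^4 - 2 * F2 * wn^3 * cs + H * (9*cs - C)"
definition cA0 where "cA0 wn cs C D1 D2 F1 F2 H = D1 * wn^4 + 4 * F1 * wn^3 * cs - F1 * wn^3 * C + D2 * wn^4 + 4 * F2 * wn^3 * cs - 2 * F2 * wn^3 * C + H * (3*C - 8*cs)"

lemma key_alg:
  fixes wn cs C c D1 D2 F1 F2 H :: real
  assumes "c \<noteq> 1" "wn \<noteq> 0"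
  shows "RV wn cs c ((cs*c - C)/wn) D1 D2 F1 F2 - LV cs C c H =
    (cA0 wn cs C D1 D2 F1 F2 H + cA1 wn cs C D1 D2 F1 F2 H * c + cA2 wn cs C D1 D2 F1 F2 H * c^2) / (1-c)^3"
proof -
  define d where "d = 1 - c"
  have d: "d \<noteq> 0" using assms d_def by simp
  have c: "c = 1 - d" using d_def by simp
  have r: "RV wn cs c ((cs*c - C)/wn) D1 D2 F1 F2 = (D1 * wn^4 * d^2 + F1 * (4 * wn^3 * cs) * d^2 + F1 * wn^3 * (cs*c - C) * d
     + D2 * wn^4 * d + F2 * (4*wn^3*cs) * d + 2 * F2 * wn^3 * (cs*c - C)) / d^3"
    unfolding RV_def d_def[symmetric] using d assms(2)
    by (simp add: field_simps eval_nat_numeral)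
  have l: "LV cs C c H = (-(8-9*c+3*c^2)*(c*C - cs) * H - 3*C*H*d^3) / d^3"
    unfolding LV_def d_def[symmetric] using d by (simp add: field_simps)
  show ?thesis unfolding r l d_def[symmetric] unfolding cA0_def cA1_def cA2_def c
    apply (simp only: diff_divide_distrib[symmetric])
    apply (rule arg_cong[where f="\<lambda>z. z / d^3"])
    by (simp add: algebra_simps power2_eq_square power3_eq_cube eval_nat_numeral)
qed

lemma deriv_quot:
  fixes u q :: "real \<Rightarrow> real"
  assumes "(u has_real_derivative u') (at s)" "(q has_real_derivative q') (at s)" "q s \<noteq> 0"
  shows "((\<lambda>t. u t / q t ^ k) has_real_derivative (u' / q s ^ k - real k * u s * q' / q s ^ (Suc k))) (at s)"
proof -
  have "((\<lambda>t. u t / q t ^ k) has_real_derivative (u' * q s ^ k - u s * (of_nat k * (q' * q s ^ (k - Suc 0)))) / (q s ^ k * q s ^ k)) (at s)"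
    by (rule DERIV_divide[OF assms(1) DERIV_power[OF assms(2)]]) (use assms(3) in simp)
  moreover have "(u' * q s ^ k - u s * (of_nat k * (q' * q s ^ (k - Suc 0)))) / (q s ^ k * q s ^ k) = u' / q s ^ k - real k * u s * q' / q s ^ (Suc k)"
  proof (cases k)
    case 0 then show ?thesis by simp
  next
    case (Suc m)
    then show ?thesis using assms(3) by (simp add: field_simps)
  qed
  ultimately show ?thesis by simp
qed

lemma deriv_G:
  assumes "(f1 has_real_derivative D1) (at s)" "(f2 has_real_derivative D2) (at s)" "cos s * C + sin s * a \<noteq> 1"
  shows "((\<lambda>t. f1 t * sin t ^ 4 / (1 - (cos t * C + sin t * a)) ^ 1 + f2 t * sin t ^ 4 / (1 - (cos t * C + sin t * a)) ^ 2)
     has_real_derivative RV (sin s) (cos s) (cos s * C + sin s * a) (- sin s * C + cos s * a) D1 D2 (f1 s) (f2 s)) (at s)"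
proof -
  define q where "q = (\<lambda>t. 1 - (cos t * C + sin t * a))"
  have q: "(q has_real_derivative (sin s * C - cos s * a)) (at s)"
    unfolding q_def by (auto intro!: derivative_eq_intros)
  have q0: "q s \<noteq> 0" using assms(3) q_def by simp
  have u1: "((\<lambda>t. f1 t * sin t ^ 4) has_real_derivative (D1 * sin s ^ 4 + f1 s * (4 * sin s ^ 3 * cos s))) (at s)"
    by (auto intro!: derivative_eq_intros assms(1))
  have u2: "((\<lambda>t. f2 t * sin t ^ 4) has_real_derivative (D2 * sin s ^ 4 + f2 s * (4 * sin s ^ 3 * cos s))) (at s)"
    by (auto intro!: derivative_eq_intros assms(2))
  have "((\<lambda>t. f1 t * sin t ^ 4 / q t ^ 1 + f2 t * sin t ^ 4 / q t ^ 2) has_real_derivative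
     ((D1 * sin s ^ 4 + f1 s * (4 * sin s ^ 3 * cos s)) / q s ^ 1 - real 1 * (f1 s * sin s ^ 4) * (sin s * C - cos s * a) / q s ^ (Suc 1))
    + ((D2 * sin s ^ 4 + f2 s * (4 * sin s ^ 3 * cos s)) / q s ^ 2 - real 2 * (f2 s * sin s ^ 4) * (sin s * C - cos s * a) / q s ^ (Suc 2))) (at s)"
    by (rule DERIV_add[OF deriv_quot[OF u1 q q0] deriv_quot[OF u2 q q0]])
  moreover have "((D1 * sin s ^ 4 + f1 s * (4 * sin s ^ 3 * cos s)) / q s ^ 1 - real 1 * (f1 s * sin s ^ 4) * (sin s * C - cos s * a) / q s ^ (Suc 1))
    + ((D2 * sin s ^ 4 + f2 s * (4 * sin s ^ 3 * cos s)) / q s ^ 2 - real 2 * (f2 s * sin s ^ 4) * (sin s * C - cos s * a) / q s ^ (Suc 2))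
    = RV (sin s) (cos s) (cos s * C + sin s * a) (- sin s * C + cos s * a) D1 D2 (f1 s) (f2 s)"
  proof -
    define Q where "Q = q s"
    have Q: "1 - (cos s * C + sin s * a) = Q" unfolding Q_def q_def by simp
    show ?thesis unfolding RV_def Q Q_def[symmetric]
      by (simp add: add_divide_distrib diff_divide_distrib algebra_simps power2_eq_square)
  qed
  ultimately show ?thesis unfolding q_def by simp
qed

lemma Psi_val:
  fixes p g x :: "'a::euclidean_space"
  assumes np: "norm p = 1" and ng: "norm g = 1" and nx: "norm x = 1" and R: "0 < R" "R < pi"
    and px: "p \<bullet> x = cos R" and c1: "x \<bullet> g \<noteq> 1"
  shows "- 15 * sin R * (Psi6 g x \<bullet> grad_d p x) = -(8-9*(x\<bullet>g)+3*(x\<bullet>g)^2)*((x\<bullet>g)*cos R - p\<bullet>g)/(1-(x\<bullet>g))^3"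
proof -
  define c where "c = x \<bullet> g"
  have xx: "x \<bullet> x = 1" using nx by (simp add: power2_norm_eq_inner[symmetric])
  have gg: "g \<bullet> g = 1" using ng by (simp add: power2_norm_eq_inner[symmetric])
  have sR: "sdist p x = R" using sdist_eq_iff[OF np nx] R px by simp
  have sinR: "sin R > 0" using R by (simp add: sin_gt_zero)
  have c1': "c \<noteq> 1" using c1 c_def by simp
  show ?thesis
  proof (cases "c = -1")
    case True
    have "(x + g) \<bullet> (x + g) = 0" using xx gg True c_def by (simp add: inner_add_left inner_add_right inner_commute)
    then have "x = - g" by (simp add: add_eq_0_iff2)
    then have pg: "p \<bullet> g = - cos R" using px by simp
    have "sdist (-g) x = 0" unfolding sdist_def using \<open>x = -g\<close> gg by simp
    then have "Psi6 g x = 0" unfolding Psi6_def Phi6_def by simp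
    then show ?thesis using True pg c_def by simp
  next
    case False
    define u where "u = sdist (-g) x"
    have ng': "norm (-g) = 1" using ng by simp
    have cu: "cos u = - c" unfolding u_def using cos_sdist[OF ng' nx] c_def by (simp add: inner_commute)
    have u0: "0 \<le> u" "u \<le> pi" unfolding u_def sdist_def using inner_bounds[OF ng' nx] by (auto intro: arccos_lbound arccos_ubound)
    have "u \<noteq> 0" using cu False by auto
    moreover have "u \<noteq> pi" using cu c1' by auto
    ultimately have u1: "0 < u" "u < pi" using u0 by auto
    have sinu: "sin u > 0" using u1 by (simp add: sin_gt_zero)
    have su2: "sin u ^ 2 = 1 - c^2" using cu by (simp add: sin_squared_eq)
    have Psi: "Psi6 g x = (I6 u / sin u ^ 5) *\<^sub>R grad_d (-g) x"
      unfolding Psi6_def Phi6_def phi6_def u_def[symmetric] using \<open>u \<noteq> 0\<close> by simp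
    have inn: "(-g - ((-g) \<bullet> x) *\<^sub>R x) \<bullet> (p - (p \<bullet> x) *\<^sub>R x) = c * cos R - p \<bullet> g"
      using xx px unfolding c_def by (simp add: inner_diff_left inner_diff_right inner_commute algebra_simps)
    have gd: "grad_d (-g) x \<bullet> grad_d p x = (c * cos R - p \<bullet> g) / (sin u * sin R)"
    proof -
      have "grad_d (-g) x \<bullet> grad_d p x = ((-1 / sin u) * (-1 / sin R)) * ((-g - ((-g) \<bullet> x) *\<^sub>R x) \<bullet> (p - (p \<bullet> x) *\<^sub>R x))"
        unfolding grad_d_def u_def[symmetric] sR by (simp only: inner_scaleR_left inner_scaleR_right mult_ac)
      then show ?thesis unfolding inn by simp
    qed
    have I6u: "15 * I6 u = (1 + c)^3 * (8 - 9*c + 3*c^2)"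
      using I6_eq[OF u0(1)] cu by (simp add: algebra_simps eval_nat_numeral)
    have s6: "sin u ^ 6 = (1-c)^3 * (1+c)^3"
    proof -
      have "sin u ^ 6 = (sin u ^ 2)^3" by simp
      also have "\<dots> = (1-c)^3 * (1+c)^3" unfolding su2 by (simp add: algebra_simps eval_nat_numeral)
      finally show ?thesis .
    qed
    have p1: "1 + c \<noteq> 0" using False by auto
    have p2: "1 - c \<noteq> 0" using c1' by auto
    have "- 15 * sin R * (Psi6 g x \<bullet> grad_d p x) = - (15 * I6 u) * (c * cos R - p \<bullet> g) / sin u ^ 6"
      unfolding Psi inner_scaleR_left gd using sinR sinu by (simp add: field_simps eval_nat_numeral)
    also have "\<dots> = -(8-9*c+3*c^2)*(c*cos R - p\<bullet>g)/(1-c)^3"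
      unfolding I6u s6 using p1 p2 by (simp add: field_simps)
    finally show ?thesis unfolding c_def .
  qed
qed

lemma cA_forms:
  fixes wn cs C D1 D2 F1 F2 H :: real
  shows "cA2 wn cs C D1 D2 F1 F2 H = wn^3 * ((D1*wn) + 3 * F1 * cs) - 3 * cs * H"
    "cA1 wn cs C D1 D2 F1 F2 H = wn^3 * (-2 * (D1*wn) - 7 * F1 * cs + F1 * C - (D2*wn) - 2 * F2 * cs) + H * (9*cs - C)"
    "cA0 wn cs C D1 D2 F1 F2 H = wn^3 * ((D1*wn) + 4 * F1 * cs - F1 * C + (D2*wn) + 4 * F2 * cs - 2 * F2 * C) + H * (3*C - 8*cs)"
  unfolding cA0_def cA1_def cA2_def by (simp_all add: algebra_simps eval_nat_numeral)

lemma A_zero: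
  fixes wn cs C D1 D2 F1 F2 H :: real
  assumes "wn \<noteq> 0" "H = F2 * wn^3" "D1 = (- 3 * cs * F1 + 3 * cs * F2) / wn"
    "D2 = ((C - cs) * F1 + (cs - C) * F2) / wn"
  shows "cA0 wn cs C D1 D2 F1 F2 H = 0 \<and> cA1 wn cs C D1 D2 F1 F2 H = 0 \<and> cA2 wn cs C D1 D2 F1 F2 H = 0"
proof -
  have d1: "D1 * wn = - 3 * cs * F1 + 3 * cs * F2" using assms(1,3) by simp
  have d2: "D2 * wn = (C - cs) * F1 + (cs - C) * F2" using assms(1,4) by simp
  show ?thesis unfolding cA_forms d1 d2 assms(2) by (simp add: algebra_simps)
qed

lemma A_solve:
  fixes wn cs C D1 D2 F1 F2 H :: real
  assumes "wn \<noteq> 0" "cs \<noteq> C" "cA0 wn cs C D1 D2 F1 F2 H = 0" "cA1 wn cs C D1 D2 F1 F2 H = 0" "cA2 wn cs C D1 D2 F1 F2 H = 0"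
  shows "H = F2 * wn^3 \<and> D1 = (- 3 * cs * F1 + 3 * cs * F2) / wn \<and> D2 = ((C - cs) * F1 + (cs - C) * F2) / wn"
proof -
  have s: "cA0 wn cs C D1 D2 F1 F2 H + cA1 wn cs C D1 D2 F1 F2 H + cA2 wn cs C D1 D2 F1 F2 H = 2 * (cs - C) * (F2 * wn^3 - H)"
    unfolding cA_forms by (simp add: algebra_simps)
  then have H: "H = F2 * wn^3" using assms(2-5) by simp
  have w3: "wn^3 \<noteq> 0" using assms(1) by simp
  have "wn^3 * ((D1*wn) - (- 3 * cs * F1 + 3 * cs * F2)) = 0" using assms(5) unfolding cA_forms H
    by (simp add: algebra_simps)
  then have d1: "D1 * wn = - 3 * cs * F1 + 3 * cs * F2" using w3 by simp
  have "wn^3 * ((D2*wn) - ((C - cs) * F1 + (cs - C) * F2)) = 0" using assms(4) unfolding cA_forms H d1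
    by (simp add: algebra_simps)
  then have d2: "D2 * wn = (C - cs) * F1 + (cs - C) * F2" using w3 by simp
  show ?thesis using H d1 d2 assms(1) by (simp add: field_simps)
qed

theorem lemma3p3:
  fixes p y :: "'a::euclidean_space"
    and \<gamma> :: "real \<Rightarrow> 'a"
    and R :: real
    and h f1 f2 :: "real \<Rightarrow> real"
  assumes dim: "DIM('a) \<ge> 3"
    and p: "p \<in> sphere 0 1"
    and R: "0 < R" "R < pi / 2"
    and y: "y \<in> sphere 0 1" "sdist p y = R"
    and \<gamma>_sphere: "\<gamma> ` {R..pi} \<subseteq> sphere 0 1"
    and \<gamma>_ends: "\<gamma> R = y" "\<gamma> pi = - p"
    and \<gamma>_geod: "\<forall>s\<in>{R..pi}. \<forall>t\<in>{R..pi}. sdist (\<gamma> s) (\<gamma> t) = \<bar>s - t\<bar>"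
    and \<gamma>_dist: "\<forall>s\<in>{R..pi}. sdist p (\<gamma> s) = s"
    and smooth: "smooth_on {R<..<pi} h" "smooth_on {R<..<pi} f1" "smooth_on {R<..<pi} f2"
  shows "(\<forall>x\<in>sphere 0 1. sdist p x = R \<longrightarrow> x \<noteq> y \<longrightarrow> (\<forall>s\<in>{R<..<pi}.
            ((\<lambda>t. f1 t * sin t ^ 4 / (1 - cos (sdist x (\<gamma> t))) ^ 1
                   + f2 t * sin t ^ 4 / (1 - cos (sdist x (\<gamma> t))) ^ 2)
             has_real_derivative
               (- 15 * sin R * (Psi6 (\<gamma> s) x \<bullet> grad_d p x) * h s - 3 * cos R * h s)) (at s)))
     \<longleftrightarrow>
     (\<forall>s\<in>{R<..<pi}. h s = f2 s * sin s ^ 3 \<and>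
        (f1 has_real_derivative ((- 3 * cos s * f1 s + 3 * cos s * f2 s) / sin s)) (at s) \<and>
        (f2 has_real_derivative (((cos R - cos s) * f1 s + (cos s - cos R) * f2 s) / sin s)) (at s))"
proof -
  have np: "norm p = 1" using p by simp
  have ny: "norm y = 1" using y by simp
  have sinR: "sin R > 0" using R by (simp add: sin_gt_zero)
  have R0: "0 \<le> R" "R \<le> pi" using R by auto
  have pp: "p \<bullet> p = 1" using np by (simp add: power2_norm_eq_inner[symmetric])
  have yy: "y \<bullet> y = 1" using ny by (simp add: power2_norm_eq_inner[symmetric])
  have py: "p \<bullet> y = cos R" using sdist_eq_iff[OF np ny R0] y(2) by simp
  define e where "e = (1 / sin R) *\<^sub>R (y - cos R *\<^sub>R p)"
  have pe: "p \<bullet> e = 0" unfolding e_def using pp py by (simp add: inner_diff_right)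
  have ee: "e \<bullet> e = 1"
  proof -
    have "e \<bullet> e = (1 / sin R)^2 * ((y - cos R *\<^sub>R p) \<bullet> (y - cos R *\<^sub>R p))"
      unfolding e_def by (simp add: power2_eq_square)
    also have "(y - cos R *\<^sub>R p) \<bullet> (y - cos R *\<^sub>R p) = 1 - (cos R)^2"
      using pp py yy by (simp add: inner_diff_left inner_diff_right inner_commute power2_eq_square)
    also have "\<dots> = (sin R)^2" by (simp add: sin_squared_eq)
    finally show ?thesis using sinR by (simp add: power2_eq_square)
  qed
  have ye: "y \<bullet> e = sin R"
  proof -
    have "y \<bullet> e = (1 / sin R) * (1 - cos R ^ 2)" unfolding e_def using yy py
      by (simp add: inner_diff_right inner_commute power2_eq_square)
    moreover have "1 - cos R ^ 2 = sin R ^ 2" by (simp add: sin_squared_eq)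
    ultimately show ?thesis using sinR by (simp add: power2_eq_square)
  qed
  have ngam: "norm (\<gamma> t) = 1" if "t \<in> {R..pi}" for t using \<gamma>_sphere that by (auto simp: image_subset_iff)
  have gform: "\<gamma> t = cos t *\<^sub>R p + sin t *\<^sub>R e" if t: "t \<in> {R..pi}" for t
  proof -
    define g where "g = \<gamma> t"
    have ng: "norm g = 1" using ngam[OF t] g_def by simp
    have gg: "g \<bullet> g = 1" using ng by (simp add: power2_norm_eq_inner[symmetric])
    have t0: "0 \<le> t" "t \<le> pi" using t R by auto
    have pg: "p \<bullet> g = cos t" using sdist_eq_iff[OF np ng t0] \<gamma>_dist t g_def by simp
    have "sdist y g = t - R" using \<gamma>_geod t R0 \<gamma>_ends(1) g_def by fastforce
    then have yg: "y \<bullet> g = cos (t - R)" using sdist_eq_iff[OF ny ng, of "t - R"] t R by simp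
    have ge: "g \<bullet> e = sin t"
    proof -
      have "g \<bullet> e = (1 / sin R) * (y \<bullet> g - cos R * (p \<bullet> g))" unfolding e_def
        by (simp add: inner_diff_right inner_commute)
      also have "\<dots> = (1 / sin R) * (sin t * sin R)" unfolding yg pg cos_diff by simp
      finally show ?thesis using sinR by simp
    qed
    have "(g - (cos t *\<^sub>R p + sin t *\<^sub>R e)) \<bullet> (g - (cos t *\<^sub>R p + sin t *\<^sub>R e)) = 1 - (cos t ^ 2 + sin t ^ 2)"
      using gg pg ge pp pe ee
      by (simp add: inner_diff_left inner_diff_right inner_add_left inner_add_right inner_commute power2_eq_square algebra_simps)
    also have "\<dots> = 0" by simp
    finally show ?thesis unfolding g_def by simp
  qed
  have cx: "x \<bullet> \<gamma> t = cos t * cos R + sin t * (x \<bullet> e)" if "p \<bullet> x = cos R" "t \<in> {R..pi}" for x t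
    using that gform[OF that(2)] by (simp add: inner_add_right inner_commute)
  have cne1: "x \<bullet> \<gamma> t \<noteq> 1" if nx: "norm x = 1" and px: "p \<bullet> x = cos R" and t: "t \<in> {R<..<pi}" for x t
  proof
    assume a: "x \<bullet> \<gamma> t = 1"
    have t1: "t \<in> {R..pi}" using t by auto
    have "x \<bullet> x = 1" "\<gamma> t \<bullet> \<gamma> t = 1" using nx ngam[OF t1] by (simp_all add: power2_norm_eq_inner[symmetric])
    then have "(x - \<gamma> t) \<bullet> (x - \<gamma> t) = 0" using a
      by (simp add: inner_diff_left inner_diff_right inner_commute)
    then have "x = \<gamma> t" by simp
    moreover have "p \<bullet> \<gamma> t = cos t" using sdist_eq_iff[OF np ngam[OF t1], of t] \<gamma>_dist t1 t R by auto
    ultimately have "cos t = cos R" using px by simp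
    then have "t = R" using cos_inj_pi[of t R] t R by auto
    then show False using t by simp
  qed
  have Gder: "((\<lambda>t. f1 t * sin t ^ 4 / (1 - cos (sdist x (\<gamma> t))) ^ 1
                   + f2 t * sin t ^ 4 / (1 - cos (sdist x (\<gamma> t))) ^ 2) has_real_derivative
      RV (sin s) (cos s) (x \<bullet> \<gamma> s) ((cos s * (x \<bullet> \<gamma> s) - cos R) / sin s) D1 D2 (f1 s) (f2 s)) (at s)"
    if nx: "norm x = 1" and px: "p \<bullet> x = cos R" and s: "s \<in> {R<..<pi}"
      and d1: "(f1 has_real_derivative D1) (at s)" and d2: "(f2 has_real_derivative D2) (at s)" for x s D1 D2
  proof -
    have s1: "s \<in> {R..pi}" using s by auto
    have sins: "sin s > 0" using s R by (auto intro: sin_gt_zero)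
    have cs: "x \<bullet> \<gamma> s = cos s * cos R + sin s * (x \<bullet> e)" using cx[OF px s1] .
    have c': "(cos s * (x \<bullet> \<gamma> s) - cos R) / sin s = - sin s * cos R + cos s * (x \<bullet> e)"
    proof -
      have "cos s * (x \<bullet> \<gamma> s) - cos R = sin s * (- sin s * cos R + cos s * (x \<bullet> e))"
      proof -
        have "cos R * (cos s * cos s) + cos R * (sin s * sin s) = cos R"
          using sin_cos_squared_add[of s] by (simp add: power2_eq_square distrib_left[symmetric])
        then show ?thesis unfolding cs by (simp add: algebra_simps)
      qed
      then show ?thesis using sins by simp
    qed
    have ne: "cos s * cos R + sin s * (x \<bullet> e) \<noteq> 1" using cne1[OF nx px s] cs by simp
    show ?thesis unfolding c' unfolding cs
    proof (rule has_field_derivative_transform_within_open[OF deriv_G[OF d1 d2 ne] open_greaterThanLessThan s])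
      fix t assume t: "t \<in> {R<..<pi}"
      then have t1: "t \<in> {R..pi}" by auto
      have "cos (sdist x (\<gamma> t)) = cos t * cos R + sin t * (x \<bullet> e)"
        using cos_sdist[OF nx ngam[OF t1]] cx[OF px t1] by simp
      then show "f1 t * sin t ^ 4 / (1 - (cos t * cos R + sin t * (x \<bullet> e))) ^ 1 +
          f2 t * sin t ^ 4 / (1 - (cos t * cos R + sin t * (x \<bullet> e))) ^ 2 =
         f1 t * sin t ^ 4 / (1 - cos (sdist x (\<gamma> t))) ^ 1 + f2 t * sin t ^ 4 / (1 - cos (sdist x (\<gamma> t))) ^ 2"
        by simp
    qed
  qed
  have LHS: "- 15 * sin R * (Psi6 (\<gamma> s) x \<bullet> grad_d p x) * h s - 3 * cos R * h s = LV (cos s) (cos R) (x \<bullet> \<gamma> s) (h s)"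
    if nx: "norm x = 1" and px: "p \<bullet> x = cos R" and s: "s \<in> {R<..<pi}" for x s
  proof -
    have s1: "s \<in> {R..pi}" using s by auto
    have pg: "p \<bullet> \<gamma> s = cos s" using sdist_eq_iff[OF np ngam[OF s1], of s] \<gamma>_dist s1 R by auto
    show ?thesis unfolding LV_def
      using Psi_val[OF np ngam[OF s1] nx R(1) _ px cne1[OF nx px s]] R pg by simp
  qed
  have fder: "(f has_real_derivative deriv f s) (at s)" if "smooth_on {R<..<pi} f" "s \<in> {R<..<pi}" for f s
  proof -
    have "((deriv ^^ 0) f has_real_derivative (deriv ^^ Suc 0) f s) (at s)" using that unfolding smooth_on_def by blast
    then show ?thesis by simp
  qed
  have sdx: "sdist p x = R \<longleftrightarrow> p \<bullet> x = cos R" if "norm x = 1" for x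
    using sdist_eq_iff[OF np that R0] .
  show ?thesis (is "?lhs \<longleftrightarrow> ?rhs")
  proof
    assume H: ?rhs
    show ?lhs
    proof (intro ballI impI)
      fix x s assume x: "x \<in> sphere 0 (1::real)" and sx: "sdist p x = R" and "x \<noteq> y" and s: "s \<in> {R<..<pi}"
      have nx: "norm x = 1" using x by simp
      have px: "p \<bullet> x = cos R" using sx sdx[OF nx] by simp
      have "sin s > 0" using s R by (auto intro: sin_gt_zero)
      then have sins: "sin s \<noteq> 0" by simp
      from H s have hs: "h s = f2 s * sin s ^ 3"
        and d1: "(f1 has_real_derivative ((- 3 * cos s * f1 s + 3 * cos s * f2 s) / sin s)) (at s)"
        and d2: "(f2 has_real_derivative (((cos R - cos s) * f1 s + (cos s - cos R) * f2 s) / sin s)) (at s)" by auto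
      note A = A_zero[OF sins hs refl refl]
      have "RV (sin s) (cos s) (x \<bullet> \<gamma> s) ((cos s * (x \<bullet> \<gamma> s) - cos R) / sin s)
              ((- 3 * cos s * f1 s + 3 * cos s * f2 s) / sin s) (((cos R - cos s) * f1 s + (cos s - cos R) * f2 s) / sin s) (f1 s) (f2 s)
            - LV (cos s) (cos R) (x \<bullet> \<gamma> s) (h s) = 0"
        unfolding key_alg[OF cne1[OF nx px s] sins] using A by simp
      then show "((\<lambda>t. f1 t * sin t ^ 4 / (1 - cos (sdist x (\<gamma> t))) ^ 1
                   + f2 t * sin t ^ 4 / (1 - cos (sdist x (\<gamma> t))) ^ 2) has_real_derivative
               (- 15 * sin R * (Psi6 (\<gamma> s) x \<bullet> grad_d p x) * h s - 3 * cos R * h s)) (at s)"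
        unfolding LHS[OF nx px s] using Gder[OF nx px s d1 d2] by simp
    qed
  next
    assume H: ?lhs
    show ?rhs
    proof
      fix s assume s: "s \<in> {R<..<pi}"
      have sins: "sin s > 0" using s R by (auto intro: sin_gt_zero)
      have csR: "cos s \<noteq> cos R" using cos_inj_pi[of s R] s R by auto
      have dimpe: "dim {p, e} < DIM('a)"
      proof -
        have "dim {p, e} \<le> card {p, e}" by (rule dim_le_card') simp
        also have "\<dots> \<le> 2" by (simp add: card_insert_le_m1)
        finally show ?thesis using dim by simp
      qed
      obtain z where z: "z \<noteq> 0" "\<And>w. w \<in> span {p, e} \<Longrightarrow> orthogonal z w"
        using orthogonal_to_subspace_exists[OF dimpe] by blast
      define e2 where "e2 = (1 / norm z) *\<^sub>R z"
      have e2e2: "e2 \<bullet> e2 = 1" unfolding e2_def using z(1)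
        by (simp add: power2_norm_eq_inner[symmetric] power2_eq_square)
      have pe2: "p \<bullet> e2 = 0" "e \<bullet> e2 = 0" unfolding e2_def using z(2)[of p] z(2)[of e]
        by (auto simp: span_base orthogonal_def inner_commute)
      have poly0: "cA0 (sin s) (cos s) (cos R) (deriv f1 s) (deriv f2 s) (f1 s) (f2 s) (h s)
          + cA1 (sin s) (cos s) (cos R) (deriv f1 s) (deriv f2 s) (f1 s) (f2 s) (h s) * (cos s * cos R + sin s * (sin R * \<alpha>))
          + cA2 (sin s) (cos s) (cos R) (deriv f1 s) (deriv f2 s) (f1 s) (f2 s) (h s) * (cos s * cos R + sin s * (sin R * \<alpha>))^2 = 0"
        if ab: "\<alpha>^2 + \<beta>^2 = 1" "\<alpha> \<noteq> 1" for \<alpha> \<beta>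
      proof -
        define x where "x = cos R *\<^sub>R p + sin R *\<^sub>R (\<alpha> *\<^sub>R e + \<beta> *\<^sub>R e2)"
        have px: "p \<bullet> x = cos R" unfolding x_def using pp pe pe2 by (simp add: inner_add_right)
        have e2e: "e2 \<bullet> e = 0" using pe2(2) by (simp add: inner_commute)
        have xe: "x \<bullet> e = sin R * \<alpha>" unfolding x_def using pe ee e2e
          by (simp add: inner_add_left)
        have "x \<bullet> x = cos R ^ 2 + sin R ^ 2 * (\<alpha>^2 + \<beta>^2)" unfolding x_def using pp pe ee pe2 e2e2
          by (simp add: inner_add_left inner_add_right inner_commute power2_eq_square algebra_simps)
        then have "x \<bullet> x = 1" using ab by simp
        then have nx: "norm x = 1" by (simp add: norm_eq_sqrt_inner)
        have "x \<noteq> y" using xe ye ab(2) sinR by auto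
        have c: "x \<bullet> \<gamma> s = cos s * cos R + sin s * (sin R * \<alpha>)" using cx[OF px] s xe by simp
        have ne: "x \<bullet> \<gamma> s \<noteq> 1" using cne1[OF nx px s] .
        have D: "((\<lambda>t. f1 t * sin t ^ 4 / (1 - cos (sdist x (\<gamma> t))) ^ 1
                   + f2 t * sin t ^ 4 / (1 - cos (sdist x (\<gamma> t))) ^ 2) has_real_derivative
               (- 15 * sin R * (Psi6 (\<gamma> s) x \<bullet> grad_d p x) * h s - 3 * cos R * h s)) (at s)"
          using H nx px sdx[OF nx] \<open>x \<noteq> y\<close> s by auto
        have "RV (sin s) (cos s) (x \<bullet> \<gamma> s) ((cos s * (x \<bullet> \<gamma> s) - cos R) / sin s) (deriv f1 s) (deriv f2 s) (f1 s) (f2 s)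
            = LV (cos s) (cos R) (x \<bullet> \<gamma> s) (h s)"
          using DERIV_unique[OF Gder[OF nx px s fder[OF smooth(2) s] fder[OF smooth(3) s]] D] LHS[OF nx px s] by simp
        then have "(cA0 (sin s) (cos s) (cos R) (deriv f1 s) (deriv f2 s) (f1 s) (f2 s) (h s)
          + cA1 (sin s) (cos s) (cos R) (deriv f1 s) (deriv f2 s) (f1 s) (f2 s) (h s) * (x \<bullet> \<gamma> s)
          + cA2 (sin s) (cos s) (cos R) (deriv f1 s) (deriv f2 s) (f1 s) (f2 s) (h s) * (x \<bullet> \<gamma> s)^2) / (1 - x \<bullet> \<gamma> s)^3 = 0"
          using key_alg[of "x \<bullet> \<gamma> s" "sin s" "cos s" "cos R" "deriv f1 s" "deriv f2 s" "f1 s" "f2 s" "h s"] ne sins by simp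
        then show ?thesis using ne unfolding c[symmetric] by simp
      qed
      have q1: "(-1::real)^2 + 0^2 = 1" "(-1::real) \<noteq> 1" by simp_all
      have q2: "(0::real)^2 + 1^2 = 1" "(0::real) \<noteq> 1" by simp_all
      have q3: "(-4/5::real)^2 + (3/5)^2 = 1" "(-4/5::real) \<noteq> 1" by (simp_all add: power2_eq_square)
      have sp: "sin s * sin R > 0" using sins sinR by simp
      have A: "cA0 (sin s) (cos s) (cos R) (deriv f1 s) (deriv f2 s) (f1 s) (f2 s) (h s) = 0
         \<and> cA1 (sin s) (cos s) (cos R) (deriv f1 s) (deriv f2 s) (f1 s) (f2 s) (h s) = 0
         \<and> cA2 (sin s) (cos s) (cos R) (deriv f1 s) (deriv f2 s) (f1 s) (f2 s) (h s) = 0"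
        by (rule quad_zero[OF poly0[OF q1] poly0[OF q2] poly0[OF q3]]) (use sins sinR in \<open>simp_all add: algebra_simps\<close>)
      have S: "h s = f2 s * sin s ^ 3 \<and> deriv f1 s = (- 3 * cos s * f1 s + 3 * cos s * f2 s) / sin s
          \<and> deriv f2 s = ((cos R - cos s) * f1 s + (cos s - cos R) * f2 s) / sin s"
        using A_solve[of "sin s" "cos s" "cos R"] A sins csR by auto
      show "h s = f2 s * sin s ^ 3 \<and>
        (f1 has_real_derivative ((- 3 * cos s * f1 s + 3 * cos s * f2 s) / sin s)) (at s) \<and>
        (f2 has_real_derivative (((cos R - cos s) * f1 s + (cos s - cos R) * f2 s) / sin s)) (at s)"
        using S fder[OF smooth(2) s] fder[OF smooth(3) s] by simp
    qed
  qed
qed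

end
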